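(* Let $\mathcal{R},\mathcal{V},\mathcal{R}',\mathcal{V}'$ be finite sets with $|\mathcal{R}|=|\mathcal{R}'|$. For any positive integer $k$, if a released table $\tau'$ on $(\mathcal{R}',\mathcal{V}')$ is $k$-anonymous, then $(\Delta,\tau')$ is $Pk$-anonymous for every privacy mechanism $\Delta=(\mathcal{R},\mathcal{V},\mathcal{R}',\mathcal{V}',\Pi,\Delta)$.
   Context: A table on $(\mathcal{R},\mathcal{V})$ is a map $\mathcal{R}\to\mathcal{V}$; $\mathcal{T}$, $\mathcal{T}'$ denote the sets of tables on $(\mathcal{R},\mathcal{V})$ and $(\mathcal{R}',\mathcal{V}')$. For sets $X,Y$, $X\to Y$ is the set of maps $X\to Y$. A privacy mechanism is $(\mathcal{R},\mathcal{V},\mathcal{R}',\mathcal{V}',\Pi,\Delta)$ with $\Pi$ uniformly distributed over bijections $\mathcal{R}\to\mathcal{R}'$ and $\Delta$ a random variable in $\mathcal{T}\to(\mathcal{R}\to\mathcal{V}')$; it is a privacy mechanism from $T$ to $T'$ (random variables on $\mathcal{T},\mathcal{T}'$) if $T,\Pi,\Delta$ are mutually independent and $\Delta(T)=T'\circ\Pi$. $\tau'$ is $k$-anonymous if for every $r'\in\mathcal{R}'$ there are at least $k$ elements $\hat r'\in\mathcal{R}'$ with $\tau'(\hat r')=\tau'(r')$. $(\Delta,\tau')$ is $Pk$-anonymous (real $k\ge1$) if for all random variables $T,T'$ such that $\Delta$ is a privacy mechanism from $T$ to $T'$ and all $r\in\mathcal{R}$, $r'\in\mathcal{R}'$, $\Pr[\Pi(r)=r'\mid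 T'=\tau']\le1/k$. *)

theory Defs
  imports "HOL-Probability.Probability"
begin

text \<open>Tables on (R,V) are maps R \<Rightarrow> V; the finite sets R,V,R',V' are finite types.
  All random variables live on one probability space M with sample type 'w.\<close>

definition random_var :: "'w measure \<Rightarrow> ('w \<Rightarrow> 'a) \<Rightarrow> bool" where
  "random_var M X \<longleftrightarrow> X \<in> measurable M (count_space UNIV)"

definition privacy_mechanism ::
  "'w measure \<Rightarrow> ('w \<Rightarrow> ('r::finite \<Rightarrow> 'r2::finite)) \<Rightarrow> ('w \<Rightarrow> (('r \<Rightarrow> 'v::finite) \<Rightarrow> ('r \<Rightarrow> 'v2::finite))) \<Rightarrow> bool" where
  "privacy_mechanism M Pm Dl \<longleftrightarrow>
     prob_space M \<and> random_var M Pm \<and> random_var M Dl \<and>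
     (\<forall>\<pi>. measure M {\<omega> \<in> space M. Pm \<omega> = \<pi>} =
            (if bij \<pi> then 1 / real (card {\<sigma>::'r \<Rightarrow> 'r2. bij \<sigma>}) else 0))"

definition mechanism_from ::
  "'w measure \<Rightarrow> ('w \<Rightarrow> ('r::finite \<Rightarrow> 'r2::finite)) \<Rightarrow> ('w \<Rightarrow> (('r \<Rightarrow> 'v::finite) \<Rightarrow> ('r \<Rightarrow> 'v2::finite)))
    \<Rightarrow> ('w \<Rightarrow> ('r \<Rightarrow> 'v)) \<Rightarrow> ('w \<Rightarrow> ('r2 \<Rightarrow> 'v2)) \<Rightarrow> bool" where
  "mechanism_from M Pm Dl T T' \<longleftrightarrow>
     random_var M T \<and> random_var M T' \<and>
     (\<forall>A B C. measure M {\<omega> \<in> space M. T \<omega> \<in> A \<and> Pm \<omega> \<in> B \<and> Dl \<omega> \<in> C} =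
        measure M {\<omega> \<in> space M. T \<omega> \<in> A} * measure M {\<omega> \<in> space M. Pm \<omega> \<in> B}
          * measure M {\<omega> \<in> space M. Dl \<omega> \<in> C}) \<and>
     (\<forall>\<omega> \<in> space M. Dl \<omega> (T \<omega>) = T' \<omega> \<circ> Pm \<omega>)"

text \<open>Conditional probability Pr[A | B] = Pr[A \<inter> B] / Pr[B] (equal to 0 if Pr[B] = 0).\<close>
definition cond_prob :: "'w measure \<Rightarrow> ('w \<Rightarrow> bool) \<Rightarrow> ('w \<Rightarrow> bool) \<Rightarrow> real" where
  "cond_prob M P Q = measure M {\<omega> \<in> space M. P \<omega> \<and> Q \<omega>} / measure M {\<omega> \<in> space M. Q \<omega>}"

definition k_anonymous :: "('r2::finite \<Rightarrow> 'v2) \<Rightarrow> nat \<Rightarrow> bool" where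
  "k_anonymous \<tau>' k \<longleftrightarrow> (\<forall>r'. card {r''. \<tau>' r'' = \<tau>' r'} \<ge> k)"

definition Pk_anonymous ::
  "'w measure \<Rightarrow> ('w \<Rightarrow> ('r::finite \<Rightarrow> 'r2::finite)) \<Rightarrow> ('w \<Rightarrow> (('r \<Rightarrow> 'v::finite) \<Rightarrow> ('r \<Rightarrow> 'v2::finite)))
    \<Rightarrow> ('r2 \<Rightarrow> 'v2) \<Rightarrow> real \<Rightarrow> bool" where
  "Pk_anonymous M Pm Dl \<tau>' k \<longleftrightarrow>
     (\<forall>(T :: 'w \<Rightarrow> ('r \<Rightarrow> 'v)) (T' :: 'w \<Rightarrow> ('r2 \<Rightarrow> 'v2)). mechanism_from M Pm Dl T T' \<longrightarrow>
        (\<forall>r r'. cond_prob M (\<lambda>\<omega>. Pm \<omega> r = r') (\<lambda>\<omega>. T' \<omega> = \<tau>') \<le> 1 / k))"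

end

theory Submission
  imports Defs
begin

lemma rv_set: "random_var M X \<Longrightarrow> {\<omega>\<in>space M. P (X \<omega>)} \<in> sets M"
proof -
  assume "random_var M X"
  then have "X \<in> measurable M (count_space UNIV)" by (simp add: random_var_def)
  from measurable_sets[OF this, of "{x. P x}"]
  show ?thesis by (simp add: vimage_def Int_def conj_commute)
qed

lemma rv_pair:
  fixes X :: "'w \<Rightarrow> 'a::countable" and Y :: "'w \<Rightarrow> 'b::countable"
  assumes "random_var M X" "random_var M Y"
  shows "random_var M (\<lambda>\<omega>. (X \<omega>, Y \<omega>))"
  unfolding random_var_def measurable_count_space_eq2_countable
proof (intro conjI ballI)
  show "(\<lambda>\<omega>. (X \<omega>, Y \<omega>)) \<in> space M \<rightarrow> UNIV" by simp
next
  fix a :: "'a \<times> 'b"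
  have e: "(\<lambda>\<omega>. (X \<omega>, Y \<omega>)) -` {a} \<inter> space M
      = {\<omega>\<in>space M. X \<omega> = fst a} \<inter> {\<omega>\<in>space M. Y \<omega> = snd a}"
    by (rule set_eqI) (simp add: prod_eq_iff conj_ac)
  have "{\<omega>\<in>space M. X \<omega> = fst a} \<in> sets M" by (rule rv_set[OF assms(1)])
  moreover have "{\<omega>\<in>space M. Y \<omega> = snd a} \<in> sets M" by (rule rv_set[OF assms(2)])
  ultimately show "(\<lambda>\<omega>. (X \<omega>, Y \<omega>)) -` {a} \<inter> space M \<in> sets M"
    unfolding e by (rule sets.Int)
qed

lemma (in prob_space) prob_sum:
  assumes "random_var M F" "finite X"
  shows "prob {\<omega>\<in>space M. F \<omega> \<in> X} = (\<Sum>x\<in>X. prob {\<omega>\<in>space M. F \<omega> = x})"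
proof -
  have "{\<omega>\<in>space M. F \<omega> \<in> X} = (\<Union>x\<in>X. {\<omega>\<in>space M. F \<omega> = x})" by auto
  moreover have "measure M (\<Union>x\<in>X. {\<omega>\<in>space M. F \<omega> = x}) = (\<Sum>x\<in>X. prob {\<omega>\<in>space M. F \<omega> = x})"
    apply (rule measure_finite_Union[OF assms(2)])
      apply (rule image_subsetI, rule rv_set[OF assms(1)])
     apply (unfold disjoint_family_on_def, blast)[1]
    by simp
  ultimately show ?thesis by simp
qed


theorem lemma1:
  fixes M :: "'w measure"
    and Pm :: "'w \<Rightarrow> ('r::finite \<Rightarrow> 'r2::finite)"
    and Dl :: "'w \<Rightarrow> (('r \<Rightarrow> 'v::finite) \<Rightarrow> ('r \<Rightarrow> 'v2::finite))"
    and \<tau>' :: "'r2 \<Rightarrow> 'v2"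
    and k :: nat
  assumes "CARD('r) = CARD('r2)"
    and "k > 0"
    and "privacy_mechanism M Pm Dl"
    and "k_anonymous \<tau>' k"
  shows "Pk_anonymous M Pm Dl \<tau>' (real k)"
proof -
  define c where "c = real (card {\<sigma>::'r \<Rightarrow> 'r2. bij \<sigma>})"
  have ps: "prob_space M" and rvP: "random_var M Pm" and rvD: "random_var M Dl"
    and unif: "\<And>\<pi>. measure M {\<omega>\<in>space M. Pm \<omega> = \<pi>} = (if bij \<pi> then 1 / c else 0)"
    using assms(3) unfolding privacy_mechanism_def c_def by blast+
  interpret prob_space M by (rule ps)
  show ?thesis unfolding Pk_anonymous_def
  proof (intro allI impI)
    fix T :: "'w \<Rightarrow> ('r \<Rightarrow> 'v)" and T' :: "'w \<Rightarrow> ('r2 \<Rightarrow> 'v2)" and r :: 'r and r' :: 'r2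
    assume mf: "mechanism_from M Pm Dl T T'"
    have rvT: "random_var M T" and rvT': "random_var M T'"
      and ind: "\<And>A B C. prob {\<omega> \<in> space M. T \<omega> \<in> A \<and> Pm \<omega> \<in> B \<and> Dl \<omega> \<in> C} =
        prob {\<omega> \<in> space M. T \<omega> \<in> A} * prob {\<omega> \<in> space M. Pm \<omega> \<in> B}
          * prob {\<omega> \<in> space M. Dl \<omega> \<in> C}"
      and eqn: "\<And>\<omega>. \<omega> \<in> space M \<Longrightarrow> Dl \<omega> (T \<omega>) = T' \<omega> \<circ> Pm \<omega>"
      using mf unfolding mechanism_from_def by blast+
    define E where "E r'' = {\<omega>\<in>space M. Pm \<omega> r = r'' \<and> T' \<omega> = \<tau>'}" for r''
    define X :: "'r2 \<Rightarrow> (('r \<Rightarrow> 'v) \<times> ('r \<Rightarrow> 'r2) \<times> (('r \<Rightarrow> 'v) \<Rightarrow> ('r \<Rightarrow> 'v2))) set"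
      where "X r'' = {x. bij (fst (snd x)) \<and> fst (snd x) r = r'' \<and> snd (snd x) (fst x) = \<tau>' \<circ> fst (snd x)}" for r''
    define F where "F \<omega> = (T \<omega>, Pm \<omega>, Dl \<omega>)" for \<omega>
    have rvF: "random_var M F" unfolding F_def by (intro rv_pair rvT rvP rvD)
    define N where "N = {\<omega>\<in>space M. \<not> bij (Pm \<omega>)}"
    have Nsets: "N \<in> sets M" unfolding N_def by (rule rv_set[OF rvP])
    have "prob N = prob {\<omega>\<in>space M. Pm \<omega> \<in> {\<pi>. \<not> bij \<pi>}}" unfolding N_def by simp
    also have "\<dots> = (\<Sum>\<pi>\<in>{\<pi>. \<not> bij \<pi>}. prob {\<omega>\<in>space M. Pm \<omega> = \<pi>})"
      by (rule prob_sum[OF rvP]) simp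
    also have "\<dots> = 0" using unif by simp
    finally have N0: "prob N = 0" .
    have Nnull: "N \<in> null_sets M" using Nsets N0
      by (simp add: null_sets_def emeasure_eq_measure)
    have EX: "prob (E r'') = prob {\<omega>\<in>space M. F \<omega> \<in> X r''}" for r''
    proof -
      have "{\<omega>\<in>space M. F \<omega> \<in> X r''} = E r'' - N"
      proof (intro set_eqI iffI)
        fix \<omega> assume "\<omega> \<in> {\<omega>\<in>space M. F \<omega> \<in> X r''}"
        then have w: "\<omega> \<in> space M" and b: "bij (Pm \<omega>)" and pr: "Pm \<omega> r = r''"
          and d: "Dl \<omega> (T \<omega>) = \<tau>' \<circ> Pm \<omega>"
          unfolding F_def X_def by auto
        have "T' \<omega> \<circ> Pm \<omega> = \<tau>' \<circ> Pm \<omega>" using d eqn[OF w] by simp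
        then have "T' \<omega> = \<tau>'" using b surj_fun_eq[of "Pm \<omega>" UNIV "T' \<omega>" \<tau>']
          by (simp add: bij_is_surj)
        then show "\<omega> \<in> E r'' - N" using w b pr unfolding E_def N_def by simp
      next
        fix \<omega> assume "\<omega> \<in> E r'' - N"
        then have w: "\<omega> \<in> space M" and b: "bij (Pm \<omega>)" and pr: "Pm \<omega> r = r''"
          and t: "T' \<omega> = \<tau>'"
          unfolding E_def N_def by auto
        show "\<omega> \<in> {\<omega>\<in>space M. F \<omega> \<in> X r''}"
          using w b pr t eqn[OF w] unfolding F_def X_def by simp
      qed
      moreover have "prob (E r'' - N) = prob (E r'')"
        by (rule measure_Diff_null_set[OF _ Nnull]) (unfold E_def, rule rv_set[OF rv_pair[OF rvP rvT'], of "\<lambda>p. fst p r = r'' \<and> snd p = \<tau>'", simplified])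
      ultimately show ?thesis by simp
    qed
    define h where "h x = prob {\<omega>\<in>space M. T \<omega> = fst x} * prob {\<omega>\<in>space M. Pm \<omega> = fst (snd x)}
        * prob {\<omega>\<in>space M. Dl \<omega> = snd (snd x)}" for x :: "('r \<Rightarrow> 'v) \<times> ('r \<Rightarrow> 'r2) \<times> (('r \<Rightarrow> 'v) \<Rightarrow> ('r \<Rightarrow> 'v2))"
    have Xsum: "prob {\<omega>\<in>space M. F \<omega> \<in> X r''} = (\<Sum>x\<in>X r''. h x)" for r''
    proof -
      have "prob {\<omega>\<in>space M. F \<omega> \<in> X r''} = (\<Sum>x\<in>X r''. prob {\<omega>\<in>space M. F \<omega> = x})"
        by (rule prob_sum[OF rvF]) simp
      also have "\<dots> = (\<Sum>x\<in>X r''. h x)"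
      proof (rule sum.cong[OF refl])
        fix x :: "('r \<Rightarrow> 'v) \<times> ('r \<Rightarrow> 'r2) \<times> (('r \<Rightarrow> 'v) \<Rightarrow> ('r \<Rightarrow> 'v2))"
        have "{\<omega>\<in>space M. F \<omega> = x} = {\<omega> \<in> space M. T \<omega> \<in> {fst x} \<and> Pm \<omega> \<in> {fst (snd x)} \<and> Dl \<omega> \<in> {snd (snd x)}}"
          unfolding F_def by (cases x) auto
        then show "prob {\<omega>\<in>space M. F \<omega> = x} = h x"
          unfolding h_def using ind[of "{fst x}" "{fst (snd x)}" "{snd (snd x)}"] by simp
      qed
      finally show ?thesis .
    qed
    have same: "prob (E r'') = prob (E r')" if tr: "\<tau>' r'' = \<tau>' r'" for r''
    proof -
      define \<sigma> where "\<sigma> x = (if x = r' then r'' else if x = r'' then r' else x)" for x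
      have ss: "\<sigma> \<circ> \<sigma> = id" unfolding \<sigma>_def by (rule ext) auto
      have bs: "bij \<sigma>" using ss by (metis bij_betw_byWitness comp_apply id_apply subset_UNIV)
      have ts: "\<tau>' \<circ> \<sigma> = \<tau>'" unfolding \<sigma>_def using tr by (intro ext) auto
      define g where "g x = (fst x, \<sigma> \<circ> fst (snd x), snd (snd x))"
        for x :: "('r \<Rightarrow> 'v) \<times> ('r \<Rightarrow> 'r2) \<times> (('r \<Rightarrow> 'v) \<Rightarrow> ('r \<Rightarrow> 'v2))"
      have gg: "g (g x) = x" for x unfolding g_def by (simp add: o_assoc ss)
      have gX: "g x \<in> X r''" if "x \<in> X r'" for x
      proof -
        have "bij (\<sigma> \<circ> fst (snd x))" using that bs unfolding X_def by (simp add: bij_comp)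
        moreover have "(\<sigma> \<circ> fst (snd x)) r = r''" using that unfolding X_def \<sigma>_def by simp
        moreover have "snd (snd x) (fst x) = \<tau>' \<circ> (\<sigma> \<circ> fst (snd x))"
          using that ts unfolding X_def by (simp add: comp_assoc[symmetric])
        ultimately show ?thesis unfolding X_def g_def by simp
      qed
      have gX': "g x \<in> X r'" if "x \<in> X r''" for x
      proof -
        have "bij (\<sigma> \<circ> fst (snd x))" using that bs unfolding X_def by (simp add: bij_comp)
        moreover have "(\<sigma> \<circ> fst (snd x)) r = r'" using that unfolding X_def \<sigma>_def by simp
        moreover have "snd (snd x) (fst x) = \<tau>' \<circ> (\<sigma> \<circ> fst (snd x))"
          using that ts unfolding X_def by (simp add: comp_assoc[symmetric])
        ultimately show ?thesis unfolding X_def g_def by simp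
      qed
      have bg: "bij_betw g (X r') (X r'')"
        by (rule bij_betw_byWitness[where f'=g]) (use gg gX gX' in auto)
      have hg: "h (g x) = h x" if "x \<in> X r'" for x
      proof -
        have "bij (fst (snd x))" "bij (\<sigma> \<circ> fst (snd x))" using that bs unfolding X_def by (simp_all add: bij_comp)
        then show ?thesis unfolding h_def g_def using unif by simp
      qed
      have "(\<Sum>x\<in>X r''. h x) = (\<Sum>x\<in>X r'. h (g x))"
        by (rule sum.reindex_bij_betw[OF bg, symmetric])
      also have "\<dots> = (\<Sum>x\<in>X r'. h x)" by (rule sum.cong[OF refl]) (rule hg)
      finally show ?thesis using EX Xsum by simp
    qed
    define K where "K = {r''. \<tau>' r'' = \<tau>' r'}"
    define P where "P = prob {\<omega>\<in>space M. T' \<omega> = \<tau>'}"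
    have Esets: "E r'' \<in> sets M" for r''
      unfolding E_def by (rule rv_set[OF rv_pair[OF rvP rvT'], of "\<lambda>p. fst p r = r'' \<and> snd p = \<tau>'", simplified])
    have "(\<Sum>r''\<in>K. prob (E r'')) = prob (\<Union>r''\<in>K. E r'')"
      apply (rule measure_finite_Union[symmetric])
         apply simp
        apply (rule image_subsetI, rule Esets)
       apply (unfold disjoint_family_on_def E_def, blast)[1]
      by simp
    also have "\<dots> \<le> P" unfolding P_def
      apply (rule finite_measure_mono)
       apply (unfold E_def, blast)[1]
      by (rule rv_set[OF rvT'])
    finally have le1: "(\<Sum>r''\<in>K. prob (E r'')) \<le> P" .
    have "(\<Sum>r''\<in>K. prob (E r'')) = real (card K) * prob (E r')"
    proof -
      have "(\<Sum>r''\<in>K. prob (E r'')) = (\<Sum>r''\<in>K. prob (E r'))"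
        by (rule sum.cong[OF refl]) (rule same, simp add: K_def)
      then show ?thesis by (simp only: sum_constant)
    qed
    moreover have "card K \<ge> k" using assms(4) unfolding k_anonymous_def K_def by blast
    ultimately have le2: "real k * prob (E r') \<le> P"
    proof -
      assume a1: "(\<Sum>r''\<in>K. prob (E r'')) = real (card K) * prob (E r')" and a2: "k \<le> card K"
      have "real k * prob (E r') \<le> real (card K) * prob (E r')"
        by (rule mult_right_mono) (use a2 in simp_all)
      then show ?thesis using a1 le1 by linarith
    qed
    have "cond_prob M (\<lambda>\<omega>. Pm \<omega> r = r') (\<lambda>\<omega>. T' \<omega> = \<tau>') = prob (E r') / P"
      unfolding cond_prob_def E_def P_def by simp
    also have "\<dots> \<le> 1 / real k"
    proof (cases "P = 0")
      case True then show ?thesis by simp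
    next
      case False
      then have "P > 0" using measure_nonneg[of M "{\<omega>\<in>space M. T' \<omega> = \<tau>'}"] unfolding P_def by linarith
      then show ?thesis using le2 assms(2) by (simp add: divide_simps mult.commute)
    qed
    finally show "cond_prob M (\<lambda>\<omega>. Pm \<omega> r = r') (\<lambda>\<omega>. T' \<omega> = \<tau>') \<le> 1 / real k" .
  qed
qed

end
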